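(* If $M\preceq N$ are two non-quasianalytic weight sequences, then $L(M)\preceq L(N)$ and $\underline L(M)\preceq\underline L(N)$.
   Context: A weight sequence is $M=(M_k)_{k\ge0}$ with $M_k=\mu_0\cdots\mu_k$, $1=\mu_0\le\mu_1\le\cdots$, $\mu_k\to\infty$; non-quasianalytic if $\sum1/\mu_k<\infty$. For positive sequences, $M\preceq N$ means $\sup_{k\ge1}(M_k/N_k)^{1/k}<\infty$. $L(M)_0=1$, $L(M)_k=\min_{0\le j<k}\big(k/\sum_{\ell\ge k}\mu_\ell^{-1}\big)^{k-j}M_j$ for $k\ge1$. For a positive sequence $P$ with $P_k^{1/k}\to\infty$, $\omega_P(t)=\sup_k\log(t^kP_0/P_k)$ and its log-convex minorant is $\underline P_k=P_0\sup_{t\ge0}t^ke^{-\omega_P(t)}$; $\underline L(M)$ is the log-convex minorant of $L(M)$. *)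

theory Defs
  imports "HOL-Analysis.Analysis"
begin

definition weight_seq :: "(nat \<Rightarrow> real) \<Rightarrow> bool" where
  "weight_seq M \<longleftrightarrow> (\<exists>mu :: nat \<Rightarrow> real. mu 0 = 1 \<and> mono mu \<and>
      filterlim mu at_top sequentially \<and> (\<forall>k. M k = (\<Prod>j\<le>k. mu j)))"

definition wmu :: "(nat \<Rightarrow> real) \<Rightarrow> nat \<Rightarrow> real" where
  "wmu M k = (if k = 0 then 1 else M k / M (k - 1))"

definition non_quasianalytic :: "(nat \<Rightarrow> real) \<Rightarrow> bool" where
  "non_quasianalytic M \<longleftrightarrow> summable (\<lambda>k. 1 / wmu M k)"

definition seq_preceq :: "(nat \<Rightarrow> real) \<Rightarrow> (nat \<Rightarrow> real) \<Rightarrow> bool" where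
  "seq_preceq M N \<longleftrightarrow> bdd_above {(M k / N k) powr (1 / real k) | k. k \<ge> 1}"

definition LM :: "(nat \<Rightarrow> real) \<Rightarrow> nat \<Rightarrow> real" where
  "LM M k = (if k = 0 then 1 else
     Min ((\<lambda>j. (real k / (\<Sum>l. 1 / wmu M (l + k))) ^ (k - j) * M j) ` {..<k}))"

definition omegaP :: "(nat \<Rightarrow> real) \<Rightarrow> real \<Rightarrow> real" where
  "omegaP P t = (SUP k. ln (t ^ k * P 0 / P k))"

definition lc_minorant :: "(nat \<Rightarrow> real) \<Rightarrow> nat \<Rightarrow> real" where
  "lc_minorant P k = P 0 * (SUP t\<in>{0..}. t ^ k * exp (- omegaP P t))"

end

theory Submission
  imports Defs
begin
definition phi :: "real \<Rightarrow> real" where "phi x = (if 1 \<le> x then 1 + ln x else x)"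

lemma phi_le: "0 < x \<Longrightarrow> phi x \<le> x"
  unfolding phi_def using ln_le_minus_one[of x] by auto

lemma phi_nonneg: "0 < x \<Longrightarrow> 0 \<le> phi x"
  unfolding phi_def by auto

lemma phi_ge_ln: "0 < x \<Longrightarrow> ln x \<le> phi x"
  unfolding phi_def using ln_le_minus_one[of x] by auto

lemma phi_le_one: "0 < x \<Longrightarrow> x < 1 \<Longrightarrow> phi x \<le> 1"
  unfolding phi_def by auto

lemma phi_tangent:
  assumes x: "0 < x" and y: "0 < y"
  shows "min x 1 * ln (y / x) \<le> phi y - phi x"
proof -
  have lnyx: "ln (y/x) = ln y - ln x" using x y by (simp add: ln_div)
  show ?thesis
  proof (cases "1 \<le> x")
    case True
    show ?thesis
    proof (cases "1 \<le> y")
      case True thus ?thesis using \<open>1 \<le> x\<close> lnyx by (simp add: phi_def)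
    next
      case False thus ?thesis using \<open>1 \<le> x\<close> lnyx ln_le_minus_one[of y] y by (simp add: phi_def)
    qed
  next
    case False
    hence x1: "x < 1" by simp
    show ?thesis
    proof (cases "1 \<le> y")
      case True
      have a: "1 - x \<ge> - x * ln x"
      proof -
        have "ln (1/x) \<le> 1/x - 1" using ln_le_minus_one[of "1/x"] x by simp
        hence "- ln x \<le> 1/x - 1" using x by (simp add: ln_div)
        hence "x * (- ln x) \<le> x * (1/x - 1)" using x by (intro mult_left_mono) auto
        thus ?thesis using x by (simp add: algebra_simps)
      qed
      have b: "x * ln y \<le> ln y" using True x1 x by (simp add: mult_left_le_one_le)
      have c: "x * ln (y/x) = x * ln y - x * ln x" using lnyx by (simp add: right_diff_distrib)
      show ?thesis using a b x1 True c by (simp add: phi_def)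
    next
      case False
      have "ln (y/x) \<le> y/x - 1" using ln_le_minus_one[of "y/x"] x y by simp
      hence "x * ln (y/x) \<le> x * (y/x - 1)" using x by (intro mult_left_mono) auto
      hence "x * ln (y/x) \<le> y - x" using x by (simp add: algebra_simps)
      thus ?thesis using False x1 by (simp add: phi_def)
    qed
  qed
qed

lemma abel_nonneg:
  fixes c d :: "nat \<Rightarrow> real"
  assumes "\<And>l. c (Suc l) \<le> c l" "\<And>l. 0 \<le> c l" "\<And>n. 0 \<le> (\<Sum>l<n. d l)"
  shows "0 \<le> (\<Sum>l<n. c l * d l)"
proof -
  have "c n * (\<Sum>l<n. d l) \<le> (\<Sum>l<n. c l * d l)" for n
  proof (induction n)
    case 0 thus ?case by simp
  next
    case (Suc n)
    have "c (Suc n) * (\<Sum>l<Suc n. d l) \<le> c n * (\<Sum>l<Suc n. d l)"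
      using assms(1)[of n] assms(3)[of "Suc n"] by (intro mult_right_mono) auto
    also have "\<dots> = c n * (\<Sum>l<n. d l) + c n * d n" by (simp add: algebra_simps)
    also have "\<dots> \<le> (\<Sum>l<n. c l * d l) + c n * d n" using Suc by simp
    finally show ?case by simp
  qed
  moreover have "0 \<le> c n * (\<Sum>l<n. d l)" using assms(2,3) by simp
  ultimately show ?thesis by (meson order_trans)
qed

locale wseq =
  fixes mu :: "nat \<Rightarrow> real"
  assumes mu0: "mu 0 = 1" and mmono: "mono mu" and summ: "summable (\<lambda>l. 1 / mu l)"
begin

lemma mu_ge1: "1 \<le> mu l"
proof -
  have "mu 0 \<le> mu l" by (rule monoD[OF mmono]) simp
  thus ?thesis using mu0 by simp
qed

lemma mu_pos: "0 < mu l"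
  using mu_ge1[of l] by linarith

lemma mu_le: "a \<le> b \<Longrightarrow> mu a \<le> mu b"
  using mmono by (simp add: monoD)

definition tau :: "nat \<Rightarrow> real" where "tau k = (\<Sum>l. 1 / mu (l + k))"
definition sig :: "nat \<Rightarrow> real" where "sig k = real k / tau k"
definition KK :: "real \<Rightarrow> real" where "KK t = (\<Sum>l. phi (t / mu (Suc l)))"
definition PP :: "nat \<Rightarrow> real" where "PP j = prod mu {..j}"

lemma summ_shift: "summable (\<lambda>l. 1 / mu (l + k))"
  using summ summable_iff_shift[of "\<lambda>l. 1 / mu l" k] by simp

lemma tau_pos: "0 < tau k"
  unfolding tau_def using summ_shift by (intro suminf_pos) (auto simp: mu_pos)

lemma sig_pos: "0 < k \<Longrightarrow> 0 < sig k"
  unfolding sig_def using tau_pos[of k] by simp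

lemma sig_sums: "(\<lambda>l. sig k / mu (l + k)) sums real k"
proof -
  have "(\<lambda>l. sig k * (1 / mu (l + k))) sums (sig k * tau k)"
    unfolding tau_def using summ_shift by (intro sums_mult summable_sums)
  moreover have "sig k * tau k = real k" unfolding sig_def using tau_pos[of k] by simp
  ultimately show ?thesis by simp
qed

lemma PP_pos: "0 < PP j"
  unfolding PP_def by (intro prod_pos) (auto simp: mu_pos)

lemma PP_shift: "PP j = (\<Prod>i<j. mu (Suc i))"
  unfolding PP_def by (simp add: prod.atMost_shift mu0)

lemma phi_summ: "0 < t \<Longrightarrow> summable (\<lambda>l. phi (t / mu (l + m)))"
proof -
  assume t: "0 < t"
  have g: "summable (\<lambda>l. t * (1 / mu (l + m)))" using summ_shift by (rule summable_mult)
  have b: "norm (phi (t / mu (l + m))) \<le> t * (1 / mu (l + m))" for l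
  proof -
    have p: "0 < t / mu (l+m)" using t mu_pos[of "l+m"] by simp
    have "norm (phi (t / mu (l + m))) = phi (t / mu (l + m))"
      using phi_nonneg[OF p] by simp
    also have "\<dots> \<le> t / mu (l+m)" by (rule phi_le[OF p])
    finally show ?thesis by simp
  qed
  show ?thesis
    by (rule summable_comparison_test[where g="\<lambda>l. t * (1 / mu (l + m))", OF _ g]) (use b in blast)
qed

lemma phi_summ1: "0 < t \<Longrightarrow> summable (\<lambda>l. phi (t / mu (Suc l)))"
  using phi_summ[of t 1] by simp

lemma KK_nonneg: "0 < t \<Longrightarrow> 0 \<le> KK t"
  unfolding KK_def using phi_summ1
  by (intro suminf_nonneg) (simp_all add: phi_nonneg mu_pos)

lemma KK_split:
  assumes "1 \<le> k" "0 < t"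
  shows "KK t = (\<Sum>l<k-1. phi (t / mu (Suc l))) + (\<Sum>l. phi (t / mu (l + k)))"
proof -
  have "KK t = (\<Sum>l. phi (t / mu (Suc (l + (k-1))))) + (\<Sum>l<k-1. phi (t / mu (Suc l)))"
    unfolding KK_def using suminf_split_initial_segment[OF phi_summ1[OF assms(2)], of "k-1"] by simp
  moreover have "Suc (l + (k-1)) = l + k" for l using assms(1) by simp
  ultimately show ?thesis by simp
qed

end

context wseq begin

lemma mu_nz[simp]: "mu l \<noteq> 0"
  using mu_pos[of l] by simp

lemma ln_PP: "ln (PP j) = (\<Sum>l<j. ln (mu (Suc l)))"
  unfolding PP_shift
proof (rule ln_prod)
  fix i show "mu (Suc i) \<noteq> 0" using mu_pos[of "Suc i"] by simp
qed simp

lemma sum_ln_div: "0 < t \<Longrightarrow> (\<Sum>l<j. ln (t / mu (Suc l))) = real j * ln t - ln (PP j)"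
proof -
  assume t: "0 < t"
  have "(\<Sum>l<j. ln (t / mu (Suc l))) = (\<Sum>l<j. ln t - ln (mu (Suc l)))"
    using t by (intro sum.cong refl) (simp add: ln_div)
  also have "\<dots> = real j * ln t - (\<Sum>l<j. ln (mu (Suc l)))" by (simp add: sum_subtractf)
  finally show ?thesis by (simp add: ln_PP)
qed

lemma low1:
  assumes j: "j < k" and t: "0 < t" and ts: "t \<le> sig k"
  shows "t^k * exp (- KK t) \<le> sig k ^ (k-j) * PP j"
proof -
  have s1: "(\<Sum>l<j. phi (t / mu (Suc l))) \<le> KK t"
    unfolding KK_def using phi_summ1[OF t]
    by (intro sum_le_suminf) (auto intro!: phi_nonneg simp: mu_pos t)
  have s2: "(\<Sum>l<j. ln (t / mu (Suc l))) \<le> (\<Sum>l<j. phi (t / mu (Suc l)))"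
    by (intro sum_mono phi_ge_ln) (simp add: t mu_pos)
  have "- KK t \<le> ln (PP j) - real j * ln t" using s1 s2 sum_ln_div[OF t, of j] by linarith
  hence "exp (- KK t) \<le> exp (ln (PP j) - real j * ln t)" by simp
  also have "\<dots> = PP j / t ^ j"
    using PP_pos t by (simp add: exp_diff exp_of_nat_mult)
  finally have e: "exp (- KK t) \<le> PP j / t ^ j" .
  have "t^k * exp (- KK t) \<le> t^k * (PP j / t ^ j)" using e t by (intro mult_left_mono) auto
  also have "\<dots> = t^(k-j) * PP j" using t j by (simp add: power_diff)
  also have "\<dots> \<le> sig k ^ (k-j) * PP j"
    using t ts PP_pos[of j] by (intro mult_right_mono power_mono) auto
  finally show ?thesis .
qed

lemma min_summ: "summable (\<lambda>l. min (s / mu (l + m)) 1)" if s: "0 \<le> s"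
proof -
  have g: "summable (\<lambda>l. s * (1 / mu (l + m)))" using summ_shift by (rule summable_mult)
  have b: "norm (min (s / mu (l + m)) 1) \<le> s * (1 / mu (l + m))" for l
    using s mu_pos[of "l+m"] by auto
  show ?thesis
    by (rule summable_comparison_test[where g="\<lambda>l. s * (1 / mu (l + m))", OF _ g]) (use b in blast)
qed

lemma minsum:
  assumes k: "1 \<le> k"
  shows "real k \<le> (\<Sum>l. min (sig k / mu (Suc l)) 1)"
proof -
  define s where "s = sig k"
  have s: "0 < s" unfolding s_def using sig_pos k by simp
  define f where "f l = min (s / mu (Suc l)) 1" for l
  have fs: "summable f" unfolding f_def using min_summ[of s 1] s by simp
  have f0: "0 \<le> f l" for l unfolding f_def using s mu_pos[of "Suc l"] by simp
  have split: "suminf f = (\<Sum>l. f (l + (k-1))) + (\<Sum>l<k-1. f l)"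
    by (rule suminf_split_initial_segment[OF fs])
  have fk: "f (l + (k-1)) = min (s / mu (l + k)) 1" for l
    unfolding f_def using k by (simp add: Suc_diff_le)
  have fs2: "summable (\<lambda>l. f (l + (k-1)))" using fs by (simp only: summable_iff_shift)
  have "real k \<le> suminf f"
  proof (cases "mu k \<le> s")
    case True
    have "f l = 1" if "l < k-1" for l
    proof -
      have "mu (Suc l) \<le> mu k" using that by (intro mu_le) simp
      hence "1 \<le> s / mu (Suc l)" using True mu_pos[of "Suc l"] by simp
      thus ?thesis unfolding f_def by simp
    qed
    hence a: "(\<Sum>l<k-1. f l) = real (k-1)" by simp
    have "(\<Sum>l\<in>{0}. f (l + (k-1))) \<le> (\<Sum>l. f (l + (k-1)))"
      using fs2 f0 by (intro sum_le_suminf) auto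
    moreover have "f (0 + (k-1)) = 1" using fk[of 0] True mu_pos[of k] by simp
    ultimately have "1 \<le> (\<Sum>l. f (l + (k-1)))" by simp
    thus ?thesis using split a k by (simp add: of_nat_diff)
  next
    case False
    have "f (l + (k-1)) = s / mu (l + k)" for l
    proof -
      have "mu k \<le> mu (l + k)" by (intro mu_le) simp
      hence "s / mu (l + k) \<le> 1" using False mu_pos[of "l+k"] by simp
      thus ?thesis using fk[of l] by simp
    qed
    hence "(\<Sum>l. f (l + (k-1))) = real k"
      using sums_unique[OF sig_sums[of k]] unfolding s_def by simp
    moreover have "0 \<le> (\<Sum>l<k-1. f l)" using f0 by (simp add: sum_nonneg)
    ultimately show ?thesis using split by simp
  qed
  thus ?thesis unfolding f_def s_def by simp
qed

lemma low2:
  assumes k: "1 \<le> k" and ts: "sig k \<le> t"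
  shows "KK (sig k) + real k * ln (t / sig k) \<le> KK t"
proof -
  define s where "s = sig k"
  have s: "0 < s" unfolding s_def using sig_pos k by simp
  have t: "0 < t" using s ts unfolding s_def by simp
  have L: "0 \<le> ln (t / s)" using s ts unfolding s_def by simp
  have trm: "min (s / mu (Suc l)) 1 * ln (t / s) \<le> phi (t / mu (Suc l)) - phi (s / mu (Suc l))" for l
  proof -
    have "min (s / mu (Suc l)) 1 * ln ((t / mu (Suc l)) / (s / mu (Suc l))) \<le> phi (t / mu (Suc l)) - phi (s / mu (Suc l))"
      using s t mu_pos[of "Suc l"] by (intro phi_tangent) auto
    moreover have "(t / mu (Suc l)) / (s / mu (Suc l)) = t / s" using mu_pos[of "Suc l"] by simp
    ultimately show ?thesis by simp
  qed
  have ms: "summable (\<lambda>l. min (s / mu (Suc l)) 1)" using min_summ[of s 1] s by simp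
  have "real k * ln (t / s) \<le> (\<Sum>l. min (s / mu (Suc l)) 1) * ln (t / s)"
    using minsum[OF k] L unfolding s_def by (intro mult_right_mono) auto
  also have "\<dots> = (\<Sum>l. min (s / mu (Suc l)) 1 * ln (t / s))" by (rule suminf_mult2[OF ms])
  also have "\<dots> \<le> (\<Sum>l. phi (t / mu (Suc l)) - phi (s / mu (Suc l)))"
    using trm ms phi_summ1[OF t] phi_summ1[OF s]
    by (intro suminf_le summable_mult2 summable_diff) auto
  also have "\<dots> = KK t - KK s" unfolding KK_def
    by (rule suminf_diff[symmetric, OF phi_summ1[OF t] phi_summ1[OF s]])
  finally show ?thesis unfolding s_def by simp
qed

lemma lower:
  assumes k: "1 \<le> k" and t: "0 < t"
  shows "t^k * exp (- KK t) \<le> Min ((\<lambda>j. sig k ^ (k-j) * PP j) ` {..<k})"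
proof (rule Min.boundedI)
  show "finite ((\<lambda>j. sig k ^ (k-j) * PP j) ` {..<k})" by simp
  show "(\<lambda>j. sig k ^ (k-j) * PP j) ` {..<k} \<noteq> {}" using k by (simp add: lessThan_empty_iff)
next
  fix a assume "a \<in> (\<lambda>j. sig k ^ (k-j) * PP j) ` {..<k}"
  then obtain j where j: "j < k" and a: "a = sig k ^ (k-j) * PP j" by auto
  define s where "s = sig k"
  have s: "0 < s" unfolding s_def using sig_pos k by simp
  show "t^k * exp (- KK t) \<le> a"
  proof (cases "t \<le> s")
    case True thus ?thesis using low1[OF j t] a unfolding s_def by simp
  next
    case False
    have l2: "KK s + real k * ln (t / s) \<le> KK t" using low2[OF k, of t] False unfolding s_def by simp
    have "t^k * exp (- KK t) \<le> t^k * exp (- KK s - real k * ln (t / s))"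
      using l2 t by (intro mult_left_mono) auto
    also have "exp (- KK s - real k * ln (t / s)) = exp (- KK s) / (t / s) ^ k"
      using s t by (simp add: exp_diff exp_of_nat_mult)
    also have "t^k * (exp (- KK s) / (t / s) ^ k) = s^k * exp (- KK s)"
      using s t by (simp add: power_divide)
    also have "\<dots> \<le> a" using low1[OF j s] a unfolding s_def by simp
    finally show ?thesis .
  qed
qed

end

context wseq begin

lemma upper:
  assumes k: "1 \<le> k"
  shows "Min ((\<lambda>j. sig k ^ (k-j) * PP j) ` {..<k}) \<le> exp (2 * real k) * sig k ^ k * exp (- KK (sig k))"
proof -
  define s where "s = sig k"
  have s: "0 < s" unfolding s_def using sig_pos k by simp
  define S where "S = {j. j < k \<and> (j = 0 \<or> mu j \<le> s)}"
  have finS: "finite S" unfolding S_def by simp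
  have S0: "0 \<in> S" unfolding S_def using k by simp
  define j where "j = Max S"
  have jS: "j \<in> S" unfolding j_def using finS S0 by (intro Max_in) auto
  hence jk: "j < k" unfolding S_def by simp
  have hj1: "mu l \<le> s" if "1 \<le> l" "l \<le> j" for l
  proof -
    have "j \<noteq> 0" using that by simp
    hence "mu j \<le> s" using jS unfolding S_def by simp
    moreover have "mu l \<le> mu j" using that by (intro mu_le) simp
    ultimately show ?thesis by simp
  qed
  have hj2: "s < mu l" if "j < l" "l < k" for l
  proof (rule ccontr)
    assume "\<not> s < mu l"
    hence "l \<in> S" unfolding S_def using that by simp
    hence "l \<le> j" unfolding j_def using finS by (intro Max_ge) auto
    thus False using that by simp
  qed
  have pw: "phi (s / mu (Suc l)) \<le> 1 + (if l < j then ln (s / mu (Suc l)) else 0)" if "l < k - 1" for l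
  proof (cases "l < j")
    case True
    have "mu (Suc l) \<le> s" using True by (intro hj1) auto
    hence "1 \<le> s / mu (Suc l)" using mu_pos[of "Suc l"] by simp
    thus ?thesis using True by (simp add: phi_def)
  next
    case False
    have "s < mu (Suc l)" using False that by (intro hj2) auto
    hence "s / mu (Suc l) < 1" using mu_pos[of "Suc l"] by simp
    thus ?thesis using False phi_le_one[of "s / mu (Suc l)"] s mu_pos[of "Suc l"] by simp
  qed
  have A: "(\<Sum>l<k-1. phi (s / mu (Suc l))) \<le> real (k-1) + (real j * ln s - ln (PP j))"
  proof -
    have "(\<Sum>l<k-1. phi (s / mu (Suc l))) \<le> (\<Sum>l<k-1. 1 + (if l < j then ln (s / mu (Suc l)) else 0))"
      using pw by (intro sum_mono) simp
    also have "\<dots> = real (k-1) + (\<Sum>l<k-1. (if l < j then ln (s / mu (Suc l)) else 0))"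
      by (simp add: sum.distrib)
    also have "(\<Sum>l<k-1. (if l < j then ln (s / mu (Suc l)) else 0)) = (\<Sum>l\<in>{l\<in>{..<k-1}. l < j}. ln (s / mu (Suc l)))"
      by (rule sum.inter_filter[symmetric]) simp
    also have "{l\<in>{..<k-1}. l < j} = {..<j}" using jk by auto
    also have "(\<Sum>l\<in>{..<j}. ln (s / mu (Suc l))) = real j * ln s - ln (PP j)" by (rule sum_ln_div[OF s])
    finally show ?thesis .
  qed
  have B: "(\<Sum>l. phi (s / mu (l + k))) \<le> real k"
  proof -
    have "(\<Sum>l. phi (s / mu (l + k))) \<le> (\<Sum>l. s / mu (l + k))"
      using phi_summ[OF s, of k] sig_sums[of k] s unfolding s_def[symmetric]
      by (intro suminf_le phi_le) (auto simp: mu_pos sums_summable)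
    also have "\<dots> = real k" using sums_unique[OF sig_sums[of k]] unfolding s_def by simp
    finally show ?thesis .
  qed
  have KKs: "KK s \<le> 2 * real k + (real j * ln s - ln (PP j))"
    using KK_split[OF k s] A B k by (simp add: of_nat_diff)
  have "Min ((\<lambda>j. sig k ^ (k-j) * PP j) ` {..<k}) \<le> s ^ (k-j) * PP j"
    unfolding s_def using jk by (intro Min_le) auto
  also have "s ^ (k-j) * PP j = exp (2 * real k) * s ^ k * exp (- (2 * real k + (real j * ln s - ln (PP j))))"
  proof -
    have "exp (- (2 * real k + (real j * ln s - ln (PP j)))) = PP j / (exp (2 * real k) * s ^ j)"
      using s PP_pos[of j] by (simp add: exp_diff exp_add exp_minus exp_of_nat_mult divide_simps)
    moreover have "s ^ k = s ^ (k-j) * s ^ j" using jk by (simp add: power_add[symmetric])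
    ultimately show ?thesis using s by simp
  qed
  also have "\<dots> \<le> exp (2 * real k) * s ^ k * exp (- KK s)"
    using KKs s by (intro mult_left_mono) auto
  finally show ?thesis unfolding s_def .
qed

end

lemma major:
  assumes m: "wseq mu" and n: "wseq nu" and C: "0 < C"
    and P: "\<And>N. wseq.PP mu N \<le> C ^ N * wseq.PP nu N" and t: "0 < t"
  shows "wseq.KK nu t \<le> wseq.KK mu (C * t)"
proof -
  interpret m: wseq mu by (rule m)
  interpret n: wseq nu by (rule n)
  define c where "c l = min (t / nu (Suc l)) 1" for l
  define d where "d l = ln ((C * t / mu (Suc l)) / (t / nu (Suc l)))" for l
  have d_eq: "d l = ln C + ln (nu (Suc l)) - ln (mu (Suc l))" for l
  proof -
    have "(C * t / mu (Suc l)) / (t / nu (Suc l)) = C * nu (Suc l) / mu (Suc l)" using t by simp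
    thus ?thesis unfolding d_def using C n.mu_pos m.mu_pos by (simp add: ln_div ln_mult)
  qed
  have tang: "c l * d l \<le> phi (C * t / mu (Suc l)) - phi (t / nu (Suc l))" for l
    unfolding c_def d_def using C t n.mu_pos[of "Suc l"] m.mu_pos[of "Suc l"]
    by (intro phi_tangent) auto
  have c_anti: "c (Suc l) \<le> c l" for l
  proof -
    have "nu (Suc l) \<le> nu (Suc (Suc l))" by (intro n.mu_le) simp
    hence "t / nu (Suc (Suc l)) \<le> t / nu (Suc l)" using t n.mu_pos by (intro divide_left_mono) auto
    thus ?thesis unfolding c_def by simp
  qed
  have c_nn: "0 \<le> c l" for l unfolding c_def using t n.mu_pos[of "Suc l"] by simp
  have d_pre: "0 \<le> (\<Sum>l<N. d l)" for N
  proof -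
    have "(\<Sum>l<N. d l) = real N * ln C + (\<Sum>l<N. ln (nu (Suc l))) - (\<Sum>l<N. ln (mu (Suc l)))"
      unfolding d_eq by (simp add: sum.distrib sum_subtractf)
    also have "\<dots> = real N * ln C + ln (n.PP N) - ln (m.PP N)" by (simp add: n.ln_PP m.ln_PP)
    finally have e: "(\<Sum>l<N. d l) = real N * ln C + ln (n.PP N) - ln (m.PP N)" .
    have "ln (m.PP N) \<le> ln (C ^ N * n.PP N)" using P[of N] m.PP_pos n.PP_pos C by simp
    also have "\<dots> = real N * ln C + ln (n.PP N)" using C n.PP_pos[of N] by (simp add: ln_mult ln_realpow)
    finally show ?thesis using e by simp
  qed
  have part: "(\<Sum>l<N. phi (t / nu (Suc l))) \<le> (\<Sum>l<N. phi (C * t / mu (Suc l)))" for N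
  proof -
    have "0 \<le> (\<Sum>l<N. c l * d l)" by (rule abel_nonneg[where c=c and d=d, OF c_anti c_nn d_pre])
    also have "\<dots> \<le> (\<Sum>l<N. phi (C * t / mu (Suc l)) - phi (t / nu (Suc l)))" by (intro sum_mono tang)
    finally show ?thesis by (simp add: sum_subtractf)
  qed
  have Ct: "0 < C * t" using C t by simp
  show ?thesis unfolding n.KK_def
  proof (rule suminf_le_const[OF n.phi_summ1[OF t]])
    fix N
    have "(\<Sum>l<N. phi (C * t / mu (Suc l))) \<le> m.KK (C * t)"
      unfolding m.KK_def using m.phi_summ1[OF Ct] Ct m.mu_pos
      by (intro sum_le_suminf) (auto intro!: phi_nonneg)
    thus "(\<Sum>l<N. phi (t / nu (Suc l))) \<le> m.KK (C * t)" using part[of N] by simp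
  qed
qed

lemma preceq_of_bound:
  fixes A B :: "nat \<Rightarrow> real"
  assumes D: "0 < D" and h: "\<And>k. 1 \<le> k \<Longrightarrow> 0 \<le> A k \<and> 0 < B k \<and> A k \<le> D ^ k * B k"
  shows "seq_preceq A B"
  unfolding seq_preceq_def bdd_above_def
proof (intro exI ballI)
  fix x assume "x \<in> {(A k / B k) powr (1 / real k) |k. 1 \<le> k}"
  then obtain k where k: "1 \<le> k" and x: "x = (A k / B k) powr (1 / real k)" by auto
  have hk: "0 \<le> A k" "0 < B k" "A k \<le> D ^ k * B k" using h[OF k] by auto
  have "A k / B k \<le> D ^ k" using hk by (simp add: divide_le_eq)
  hence "x \<le> (D ^ k) powr (1 / real k)" unfolding x using hk by (intro powr_mono2) auto
  also have "(D ^ k) powr (1 / real k) = D"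
  proof -
    have "(D ^ k) powr (1 / real k) = (D powr real k) powr (1 / real k)" using D by (simp add: powr_realpow)
    also have "\<dots> = D powr (real k * (1 / real k))" by (rule powr_powr)
    also have "\<dots> = D" using k D by simp
    finally show ?thesis .
  qed
  finally show "x \<le> D" .
qed

lemma bound_of_preceq:
  fixes M N :: "nat \<Rightarrow> real"
  assumes "seq_preceq M N" and Mp: "\<And>k. 0 < M k" and Np: "\<And>k. 0 < N k" and "M 0 = N 0"
  obtains C where "1 \<le> C" "\<And>k. M k \<le> C ^ k * N k"
proof -
  obtain B where B: "\<And>x. x \<in> {(M k / N k) powr (1 / real k) |k. 1 \<le> k} \<Longrightarrow> x \<le> B"
    using assms(1) unfolding seq_preceq_def bdd_above_def by auto
  define C where "C = max B 1"
  have "M k \<le> C ^ k * N k" for k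
  proof (cases "k = 0")
    case True thus ?thesis using assms(4) by simp
  next
    case False
    hence k: "1 \<le> k" by simp
    define x where "x = M k / N k"
    have x0: "0 < x" unfolding x_def using Mp Np by simp
    have "x powr (1 / real k) \<le> B" unfolding x_def using k by (intro B) auto
    hence le: "x powr (1 / real k) \<le> C" unfolding C_def by simp
    have "x = (x powr (1 / real k)) ^ k"
      using x0 k by (simp add: powr_power powr_one)
    also have "\<dots> \<le> C ^ k" using le by (intro power_mono) auto
    finally show ?thesis unfolding x_def using Np[of k] by (simp add: divide_le_eq)
  qed
  moreover have "1 \<le> C" unfolding C_def by simp
  ultimately show ?thesis using that by blast
qed

lemma ws_from:
  assumes "weight_seq M" "non_quasianalytic M"
  obtains mu where "wseq mu" "wmu M = mu" "\<And>k. M k = wseq.PP mu k"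
proof -
  obtain mu where mu0: "mu 0 = 1" and mo: "mono mu" and Mk: "\<And>k. M k = (\<Prod>j\<le>k. mu j)"
    using assms(1) unfolding weight_seq_def by auto
  have ge1: "1 \<le> mu l" for l
  proof -
    have "mu 0 \<le> mu l" by (rule monoD[OF mo]) simp
    thus ?thesis using mu0 by simp
  qed
  have Mpos: "0 < M k" for k unfolding Mk using ge1 by (intro prod_pos) (auto intro: less_le_trans[OF zero_less_one])
  have w: "wmu M = mu"
  proof
    fix k show "wmu M k = mu k"
    proof (cases k)
      case 0 thus ?thesis using mu0 by (simp add: wmu_def)
    next
      case (Suc m)
      have "M (Suc m) = M m * mu (Suc m)" unfolding Mk by (simp add: prod.atMost_Suc)
      thus ?thesis using Suc Mpos[of m] by (simp add: wmu_def)
    qed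
  qed
  have "summable (\<lambda>l. 1 / mu l)" using assms(2) w unfolding non_quasianalytic_def by simp
  hence "wseq mu" using mu0 mo by (simp add: wseq_def)
  moreover have "M k = wseq.PP mu k" for k using \<open>wseq mu\<close> by (simp add: Mk wseq.PP_def)
  ultimately show ?thesis using that w by blast
qed

lemma LM_eq:
  assumes "wseq mu" "wmu M = mu" "\<And>k. M k = wseq.PP mu k"
  shows "LM M k = (if k = 0 then 1 else Min ((\<lambda>j. wseq.sig mu k ^ (k-j) * wseq.PP mu j) ` {..<k}))"
  unfolding LM_def wseq.sig_def[OF assms(1)] wseq.tau_def[OF assms(1)] using assms(2,3) by simp

context wseq begin

lemma Min_pos: "1 \<le> k \<Longrightarrow> 0 < Min ((\<lambda>j. sig k ^ (k-j) * PP j) ` {..<k})"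
  using sig_pos[of k] PP_pos by (subst Min_gr_iff) (auto simp: lessThan_empty_iff)

end

lemma omega_ge:
  fixes P :: "nat \<Rightarrow> real"
  assumes b: "bdd_above (range (\<lambda>j. ln (t ^ j * P 0 / P j)))"
  shows "ln (t ^ k * P 0 / P k) \<le> omegaP P t"
  unfolding omegaP_def by (rule cSUP_upper[OF _ b]) simp

lemma f_le0: fixes R :: "nat \<Rightarrow> real" assumes "0 \<le> t" "R 0 = 1" "0 < R k" "bdd_above (range (\<lambda>j. ln (t ^ j * R 0 / R j)))"
  shows "t ^ k * exp (- omegaP R t) \<le> R k"
  proof (cases "t ^ k = 0")
    case True
    have "t ^ k * exp (- omegaP R t) = 0 * exp (- omegaP R t)" using True by (rule arg_cong)
    thus ?thesis using assms(3) by linarith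
  next
    case False
    have tk0: "0 \<le> t ^ k" using assms(1) by simp
    have tk: "0 < t ^ k" using tk0 False by (metis le_less)
    have "ln (t ^ k / R k) \<le> omegaP R t" using omega_ge[OF assms(4), of k] assms(2) by simp
    hence "exp (- omegaP R t) \<le> exp (- ln (t ^ k / R k))" by simp
    also have "\<dots> = R k / t ^ k" using tk assms(3) by (simp add: exp_minus)
    finally have "exp (- omegaP R t) \<le> R k / t ^ k" .
    hence "t ^ k * exp (- omegaP R t) \<le> t ^ k * (R k / t ^ k)" using tk by (intro mult_left_mono) auto
    also have "t ^ k * (R k / t ^ k) = R k"
    proof -
      have g: "\<And>x::real. x \<noteq> 0 \<Longrightarrow> x * (R k / x) = R k" by simp
      show ?thesis using tk by (intro g) linarith
    qed
    finally show ?thesis .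
  qed

lemma lc_bound:
  fixes P Q :: "nat \<Rightarrow> real"
  assumes P0: "P 0 = 1" and Q0: "Q 0 = 1" and Pp: "\<And>k. 0 < P k" and Qp: "\<And>k. 0 < Q k"
    and D: "0 < D" and PQ: "\<And>k. P k \<le> D ^ k * Q k"
    and bP: "\<And>t. 0 < t \<Longrightarrow> bdd_above (range (\<lambda>j. ln (t ^ j * P 0 / P j)))"
    and bQ: "\<And>t. 0 < t \<Longrightarrow> bdd_above (range (\<lambda>j. ln (t ^ j * Q 0 / Q j)))"
  shows "lc_minorant P k \<le> D ^ k * lc_minorant Q k \<and> 0 < lc_minorant P k \<and> 0 < lc_minorant Q k"
proof -
  have b0: "bdd_above (range (\<lambda>j. ln (0 ^ j * R 0 / R j)))" if "R 0 = 1" for R :: "nat \<Rightarrow> real"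
  proof -
    have "ln (0 ^ j * R 0 / R j) = 0" for j using that by (cases j) auto
    thus ?thesis by (intro bdd_aboveI[where M=0]) auto
  qed
  have bP': "bdd_above (range (\<lambda>j. ln (t ^ j * P 0 / P j)))" if "0 \<le> t" for t
  proof (cases "t = 0")
    case True
    show ?thesis unfolding True by (rule b0[of P, OF P0])
  next
    case False
    hence "0 < t" using that by simp
    thus ?thesis by (rule bP)
  qed
  have bQ': "bdd_above (range (\<lambda>j. ln (t ^ j * Q 0 / Q j)))" if "0 \<le> t" for t
  proof (cases "t = 0")
    case True
    show ?thesis unfolding True by (rule b0[of Q, OF Q0])
  next
    case False
    hence "0 < t" using that by simp
    thus ?thesis by (rule bQ)
  qed
  define f where "f R t = t ^ k * exp (- omegaP R t)" for R :: "nat \<Rightarrow> real" and t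
  have f_le: "f R t \<le> R k" if "0 \<le> t" "R 0 = 1" "0 < R k" "bdd_above (range (\<lambda>j. ln (t ^ j * R 0 / R j)))" for R t
    unfolding f_def by (rule f_le0[OF that])
  have bfQ: "bdd_above (f Q ` {0..})"
  proof (rule bdd_aboveI[where M="Q k"])
    fix x assume "x \<in> f Q ` {0..}"
    then obtain t where t: "0 \<le> t" "x = f Q t" by auto
    thus "x \<le> Q k" using f_le[of t Q, OF t(1) Q0 Qp bQ'[OF t(1)]] by simp
  qed
  have bfP: "bdd_above (f P ` {0..})"
  proof (rule bdd_aboveI[where M="P k"])
    fix x assume "x \<in> f P ` {0..}"
    then obtain t where t: "0 \<le> t" "x = f P t" by auto
    thus "x \<le> P k" using f_le[of t P, OF t(1) P0 Pp bP'[OF t(1)]] by simp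
  qed
  have om_cmp: "omegaP Q (t / D) \<le> omegaP P t" if t: "0 \<le> t" for t
    unfolding omegaP_def[of Q]
  proof (rule cSUP_least)
    fix j
    have "ln ((t / D) ^ j * Q 0 / Q j) \<le> ln (t ^ j * P 0 / P j)"
    proof (cases "t = 0")
      case True thus ?thesis using P0 Q0 by (cases j) auto
    next
      case False
      hence t0: "0 < t" using t by simp
      have "(t / D) ^ j * Q 0 / Q j = t ^ j / (D ^ j * Q j)" using Q0 by (simp add: power_divide)
      also have "\<dots> \<le> t ^ j / P j" using PQ[of j] Pp[of j] t0 by (intro divide_left_mono) auto
      also have "\<dots> = t ^ j * P 0 / P j" using P0 by simp
      finally have le: "(t / D) ^ j * Q 0 / Q j \<le> t ^ j * P 0 / P j" .
      have pos: "0 < (t / D) ^ j * Q 0 / Q j" using t0 D Q0 Qp[of j] by simp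
      show ?thesis by (rule ln_mono[OF le pos])
    qed
    also have "\<dots> \<le> omegaP P t" by (rule omega_ge[OF bP'[OF t]])
    finally show "ln ((t / D) ^ j * Q 0 / Q j) \<le> omegaP P t" .
  qed simp
  have lcf: "lc_minorant R k = (SUP t\<in>{0..}. f R t)" if "R 0 = 1" for R
    unfolding lc_minorant_def f_def using that by simp
  have main: "(SUP t\<in>{0..}. f P t) \<le> D ^ k * (SUP t\<in>{0..}. f Q t)"
  proof (rule cSUP_least)
    fix t :: real assume "t \<in> {0..}"
    hence t: "0 \<le> t" by simp
    have "f P t \<le> t ^ k * exp (- omegaP Q (t / D))"
      unfolding f_def using om_cmp[OF t] t by (intro mult_left_mono) auto
    also have "\<dots> = D ^ k * f Q (t / D)" unfolding f_def using D by (simp add: power_divide)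
    also have "\<dots> \<le> D ^ k * (SUP t\<in>{0..}. f Q t)"
      using t D by (intro mult_left_mono cSUP_upper[OF _ bfQ]) auto
    finally show "f P t \<le> D ^ k * (SUP t\<in>{0..}. f Q t)" .
  qed simp
  have posf: "0 < (SUP t\<in>{0..}. f R t)" if "bdd_above (f R ` {0..})" for R
  proof -
    have "0 < f R 1" unfolding f_def by simp
    also have "f R 1 \<le> (SUP t\<in>{0..}. f R t)" by (rule cSUP_upper[OF _ that]) simp
    finally show ?thesis .
  qed
  have e1: "lc_minorant P k = (SUP t\<in>{0..}. f P t)" by (rule lcf[of P, OF P0])
  have e2: "lc_minorant Q k = (SUP t\<in>{0..}. f Q t)" by (rule lcf[of Q, OF Q0])
  show ?thesis unfolding e1 e2 using main posf[OF bfP] posf[OF bfQ] by blast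
qed

context wseq begin

lemma L_pos:
  assumes L: "\<And>k. L k = (if k = 0 then 1 else Min ((\<lambda>j. sig k ^ (k-j) * PP j) ` {..<k}))"
  shows "0 < L k"
  using L[of k] Min_pos[of k] by (cases "k = 0") auto

lemma L_lower:
  assumes L: "\<And>k. L k = (if k = 0 then 1 else Min ((\<lambda>j. sig k ^ (k-j) * PP j) ` {..<k}))"
    and t: "0 < t"
  shows "ln (t ^ k * L 0 / L k) \<le> KK t"
proof (cases "k = 0")
  case True thus ?thesis using L[of 0] KK_nonneg[OF t] by simp
next
  case False
  hence k: "1 \<le> k" by simp
  have Lk: "0 < L k" by (rule L_pos[OF L])
  have "t ^ k * exp (- KK t) \<le> L k" using lower[OF k t] L[of k] False by simp
  hence "t ^ k * exp (- KK t) * exp (KK t) \<le> L k * exp (KK t)" by (intro mult_right_mono) auto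
  hence "t ^ k \<le> L k * exp (KK t)" by (simp add: exp_minus field_simps)
  hence "t ^ k / L k \<le> exp (KK t)" using Lk by (simp add: divide_le_eq mult.commute)
  hence "ln (t ^ k / L k) \<le> ln (exp (KK t))" using t Lk by (intro ln_mono) auto
  thus ?thesis using L[of 0] by simp
qed

lemma L_bdd:
  assumes L: "\<And>k. L k = (if k = 0 then 1 else Min ((\<lambda>j. sig k ^ (k-j) * PP j) ` {..<k}))"
    and t: "0 < t"
  shows "bdd_above (range (\<lambda>j. ln (t ^ j * L 0 / L j)))"
  using L_lower[OF L t] by (intro bdd_aboveI[where M="KK t"]) auto

end

theorem lemma4p4:
  fixes M N :: "nat \<Rightarrow> real"
  assumes "weight_seq M" and "weight_seq N"
    and "non_quasianalytic M" and "non_quasianalytic N"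
    and "seq_preceq M N"
  shows "seq_preceq (LM M) (LM N) \<and> seq_preceq (lc_minorant (LM M)) (lc_minorant (LM N))"
proof -
  obtain mu where m: "wseq mu" "wmu M = mu" "\<And>k. M k = wseq.PP mu k"
    using ws_from[OF assms(1,3)] by blast
  obtain nu where n: "wseq nu" "wmu N = nu" "\<And>k. N k = wseq.PP nu k"
    using ws_from[OF assms(2,4)] by blast
  interpret m: wseq mu by (rule m(1))
  interpret n: wseq nu by (rule n(1))
  have LMm: "LM M k = (if k = 0 then 1 else Min ((\<lambda>j. m.sig k ^ (k-j) * m.PP j) ` {..<k}))" for k
    by (rule LM_eq[OF m])
  have LMn: "LM N k = (if k = 0 then 1 else Min ((\<lambda>j. n.sig k ^ (k-j) * n.PP j) ` {..<k}))" for k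
    by (rule LM_eq[OF n])
  have Mp: "0 < M k" for k using m(3) m.PP_pos by simp
  have Np: "0 < N k" for k using n(3) n.PP_pos by simp
  have MN0: "M 0 = N 0" using m(3) n(3) by (simp add: m.PP_def n.PP_def m.mu0 n.mu0)
  obtain C where C1: "1 \<le> C" and CMN: "\<And>k. M k \<le> C ^ k * N k"
    using bound_of_preceq[OF assms(5) Mp Np MN0] by blast
  have C0: "0 < C" using C1 by simp
  have P: "\<And>k. m.PP k \<le> C ^ k * n.PP k" using CMN m(3) n(3) by simp
  have LMp: "0 < LM M k" for k by (rule m.L_pos[OF LMm])
  have LNp: "0 < LM N k" for k by (rule n.L_pos[OF LMn])
  define D where "D = exp 2 * C"
  have D0: "0 < D" unfolding D_def using C0 by simp
  have key: "LM M k \<le> D ^ k * LM N k" for k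
  proof (cases "k = 0")
    case True thus ?thesis using LMm[of 0] LMn[of 0] by simp
  next
    case False
    hence k: "1 \<le> k" by simp
    define s where "s = m.sig k"
    have s: "0 < s" unfolding s_def using m.sig_pos k by simp
    have sC: "0 < s / C" using s C0 by simp
    have maj: "n.KK (s / C) \<le> m.KK (C * (s / C))" by (rule major[OF m(1) n(1) C0 P sC])
    hence maj': "n.KK (s / C) \<le> m.KK s" using C0 by simp
    have "LM M k \<le> exp (2 * real k) * s ^ k * exp (- m.KK s)"
      using m.upper[OF k] LMm[of k] False unfolding s_def by simp
    also have "\<dots> \<le> exp (2 * real k) * s ^ k * exp (- n.KK (s / C))"
      using maj' s by (intro mult_left_mono) auto
    also have "\<dots> = exp (2 * real k) * C ^ k * ((s / C) ^ k * exp (- n.KK (s / C)))"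
      using C0 by (simp add: power_divide)
    also have "\<dots> \<le> exp (2 * real k) * C ^ k * LM N k"
      using n.lower[OF k sC] LMn[of k] False C0 by (intro mult_left_mono) auto
    also have "exp (2 * real k) * C ^ k = D ^ k"
    proof -
      have "exp (2 * real k) = exp 2 ^ k" using exp_of_nat_mult[of k 2] by (simp add: mult.commute)
      thus ?thesis unfolding D_def by (simp add: power_mult_distrib)
    qed
    finally show ?thesis .
  qed
  have part1: "seq_preceq (LM M) (LM N)"
    using D0 key LMp LNp by (intro preceq_of_bound[where D=D]) (auto intro: less_imp_le)
  have lc: "lc_minorant (LM M) k \<le> D ^ k * lc_minorant (LM N) k \<and> 0 < lc_minorant (LM M) k \<and> 0 < lc_minorant (LM N) k" for k
    by (rule lc_bound[OF _ _ LMp LNp D0 key m.L_bdd[OF LMm] n.L_bdd[OF LMn]])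
       (simp_all add: LMm[of 0] LMn[of 0])
  have part2: "seq_preceq (lc_minorant (LM M)) (lc_minorant (LM N))"
    using D0 lc by (intro preceq_of_bound[where D=D]) (auto intro: less_imp_le)
  show ?thesis using part1 part2 by blast
qed

end
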